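(* Let $\lambda_1<\dots<\lambda_N$ be real and $u\in\mathbb{R}^N$ with $u_1^2,\dots,u_N^2\in(0,1)$ and $\sum_{i=1}^Nu_i^2=1$, and set $s_{\lambda,u}(l)=\sum_{i=1}^N\frac{u_i^2}{l-\lambda_i}$ for $l>\lambda_N$. Then $$\sup_{\alpha\in[-1,1]}\left|\sup_{\sigma\in\mathbb{R}^N:\,|\sigma|=1,\,\sigma\cdot u=\alpha}\sum_{i=1}^N\lambda_i\sigma_i^2-\inf_{l>\lambda_N}\left\{l-\frac{\alpha^2}{s_{\lambda,u}(l)}\right\}\right|\le2(\lambda_N-\lambda_1)\frac{u_N^2}{\sqrt{1-u_N^2}}.$$ *)

theory Defs
  imports Complex_Main
begin

text \<open>Vectors in R^N are functions nat => real, with components indexed by 1..N.\<close>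

definition s_fun :: "nat \<Rightarrow> (nat \<Rightarrow> real) \<Rightarrow> (nat \<Rightarrow> real) \<Rightarrow> real \<Rightarrow> real" where
  "s_fun N lam u l = (\<Sum>i=1..N. (u i)^2 / (l - lam i))"

end

theory Submission
  imports Defs
begin

lemma s_pos:
  assumes "1 \<le> N" "\<forall>i\<in>{1..N}. lam i < l" "0 < (u N)^2"
  shows "0 < s_fun N lam u l"
proof -
  have "(u N)^2/(l - lam N) \<le> s_fun N lam u l" unfolding s_fun_def
    by (rule member_le_sum) (use assms in \<open>auto intro!: divide_nonneg_pos\<close>)
  moreover have "0 < (u N)^2/(l - lam N)" using assms by auto
  ultimately show ?thesis by linarith
qed

lemma sq_aux: "(c::real) \<noteq> 0 \<Longrightarrow> c*(x - y/c)^2 = c*x^2 - 2*x*y + y^2/c"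
  by (simp add: field_simps power2_eq_square)

lemma weak_dual:
  assumes lt: "\<forall>i\<in>{1..N}. lam i < l" and sp: "0 < s_fun N lam u l"
    and n1: "(\<Sum>i=1..N. (\<sigma> i)^2) = 1" and a: "(\<Sum>i=1..N. \<sigma> i * u i) = \<alpha>"
  shows "(\<Sum>i=1..N. lam i * (\<sigma> i)^2) \<le> l - \<alpha>^2 / s_fun N lam u l"
proof -
  define s where "s = s_fun N lam u l"
  define t where "t = \<alpha> / s"
  define A where "A = (\<Sum>i=1..N. (l - lam i) * (\<sigma> i)^2)"
  have "0 \<le> (\<Sum>i=1..N. (l - lam i) * (\<sigma> i - t * u i/(l - lam i))^2)"
    proof (rule sum_nonneg)
    fix i assume "i \<in> {1..N}"
    then have "0 \<le> l - lam i" using lt by fastforce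
    then show "0 \<le> (l - lam i) * (\<sigma> i - t * u i/(l - lam i))^2" by simp
  qed
  also have "\<dots> = (\<Sum>i=1..N. (l - lam i) * (\<sigma> i)^2 - 2*t*(\<sigma> i * u i) + t^2 * ((u i)^2/(l - lam i)))"
  proof (rule sum.cong)
    fix i assume "i \<in> {1..N}"
    then have d: "l - lam i \<noteq> 0" using lt by fastforce
    show "(l - lam i) * (\<sigma> i - t * u i/(l - lam i))^2 = (l - lam i) * (\<sigma> i)^2 - 2*t*(\<sigma> i * u i) + t^2 * ((u i)^2/(l - lam i))"
      using sq_aux[OF d, of "\<sigma> i" "t * u i"] by (simp add: power_mult_distrib algebra_simps)
  qed simp
  also have "\<dots> = A - 2*t*\<alpha> + t^2 * s"
    by (simp add: sum.distrib sum_subtractf sum_distrib_left A_def a[symmetric] s_def s_fun_def)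
  finally have "0 \<le> A - 2*t*\<alpha> + t^2*s" .
  hence "\<alpha>^2/s \<le> A" using sp unfolding s_def[symmetric]
    by (simp add: t_def field_simps power2_eq_square)
  moreover have "(\<Sum>i=1..N. lam i * (\<sigma> i)^2) = l - A"
  proof -
    have "(\<Sum>i=1..N. lam i * (\<sigma> i)^2) = (\<Sum>i=1..N. l * (\<sigma> i)^2 - (l - lam i) * (\<sigma> i)^2)"
      by (rule sum.cong) (auto simp: algebra_simps)
    also have "\<dots> = l * (\<Sum>i=1..N. (\<sigma> i)^2) - A" by (simp add: sum_subtractf A_def sum_distrib_left)
    also have "\<dots> = l - A" using n1 by simp
    finally show ?thesis .
  qed
  ultimately show ?thesis unfolding s_def by linarith
qed

lemma val_le_top:
  fixes lam :: "nat \<Rightarrow> real"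
  assumes "\<forall>i\<in>{1..N}. lam i \<le> lam N" "(\<Sum>i=1..N. (\<sigma> i)^2) = 1"
  shows "(\<Sum>i=1..N. lam i * (\<sigma> i)^2) \<le> lam N"
proof -
  have "(\<Sum>i=1..N. lam i * (\<sigma> i)^2) \<le> (\<Sum>i=1..N. lam N * (\<sigma> i)^2)"
    using assms by (intro sum_mono mult_right_mono) auto
  also have "\<dots> = lam N" by (metis assms(2) mult.right_neutral sum_distrib_left)
  finally show ?thesis .
qed


lemma basics:
  fixes N :: nat and lam u :: "nat \<Rightarrow> real"
  assumes mono: "\<And>i j. 1 \<le> i \<Longrightarrow> i < j \<Longrightarrow> j \<le> N \<Longrightarrow> lam i < lam j"
    and u_pos: "\<And>i. 1 \<le> i \<Longrightarrow> i \<le> N \<Longrightarrow> 0 < (u i)^2 \<and> (u i)^2 < 1"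
    and u_norm: "(\<Sum>i=1..N. (u i)^2) = 1"
  shows "2 \<le> N" "\<forall>i\<in>{1..N}. lam 1 \<le> lam i \<and> lam i \<le> lam N" "lam 1 < lam N"
    "0 < (u N)^2" "(u N)^2 < 1"
proof -
  show N2: "2 \<le> N"
  proof (rule ccontr)
    assume "\<not> 2 \<le> N"
    then have "N = 0 \<or> N = 1" by auto
    then show False
    proof
      assume "N = 0" then show False using u_norm by simp
    next
      assume "N = 1" then show False using u_norm u_pos[of 1] by simp
    qed
  qed
  show "\<forall>i\<in>{1..N}. lam 1 \<le> lam i \<and> lam i \<le> lam N"
  proof
    fix i assume i: "i \<in> {1..N}"
    have "lam 1 \<le> lam i" using mono[of 1 i] i by (cases "i = 1") auto
    moreover have "lam i \<le> lam N" using mono[of i N] i by (cases "i = N") auto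
    ultimately show "lam 1 \<le> lam i \<and> lam i \<le> lam N" ..
  qed
  show "lam 1 < lam N" using mono[of 1 N] N2 by auto
  show "0 < (u N)^2" "(u N)^2 < 1" using u_pos[of N] N2 by auto
qed

lemma mean_bound:
  fixes N :: nat and lam u :: "nat \<Rightarrow> real"
  assumes "1 \<le> N" "\<forall>i\<in>{1..N}. lam 1 \<le> lam i \<and> lam i \<le> lam N"
    and u_norm: "(\<Sum>i=1..N. (u i)^2) = 1"
  shows "(\<Sum>i=1..N. (u i)^2 * (lam i - lam N)) \<ge> - (lam N - lam 1) * (1 - (u N)^2)"
proof -
  let ?D = "lam N - lam 1"
  have "(\<Sum>i=1..N. (u i)^2 * (lam i - lam N)) \<ge>
        (\<Sum>i=1..N. - ?D * (u i)^2 + (if i = N then ?D * (u N)^2 else 0))"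
  proof (rule sum_mono)
    fix i assume i: "i \<in> {1..N}"
    show "- ?D * (u i)^2 + (if i = N then ?D * (u N)^2 else 0) \<le> (u i)^2 * (lam i - lam N)"
    proof (cases "i = N")
      case False
      have "(u i)^2 * (- ?D) \<le> (u i)^2 * (lam i - lam N)"
        using assms(2) i by (intro mult_left_mono) auto
      then show ?thesis using False by (simp add: algebra_simps)
    qed (simp add: algebra_simps)
  qed
  also have "(\<Sum>i=1..N. - ?D * (u i)^2 + (if i = N then ?D * (u N)^2 else 0))
      = - ?D * (\<Sum>i=1..N. (u i)^2) + ?D * (u N)^2"
    using assms(1) by (simp add: sum.distrib sum_distrib_left)
  finally show ?thesis using u_norm by (simp add: algebra_simps)
qed


lemma B_ge:
  fixes D p :: real assumes "0 \<le> D" "0 < p" "p < 1"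
  shows "D * p \<le> 2 * D * (p / sqrt (1 - p))"
proof -
  have s: "0 < sqrt (1 - p)" "sqrt (1 - p) \<le> 1" using assms by auto
  have "p \<le> p / sqrt (1 - p)" using s assms by (simp add: le_divide_eq)
  then have "D * p \<le> D * (p / sqrt (1 - p))" using assms by (intro mult_left_mono) auto
  also have "\<dots> \<le> 2 * D * (p / sqrt (1 - p))"
  proof -
    have "0 \<le> D * (p / sqrt (1 - p))" using assms s by simp
    then show ?thesis by linarith
  qed
  finally show ?thesis .
qed

lemma case1:
  fixes N :: nat and lam u :: "nat \<Rightarrow> real"
  assumes mono: "\<And>i j. 1 \<le> i \<Longrightarrow> i < j \<Longrightarrow> j \<le> N \<Longrightarrow> lam i < lam j"
    and u_pos: "\<And>i. 1 \<le> i \<Longrightarrow> i \<le> N \<Longrightarrow> 0 < (u i)^2 \<and> (u i)^2 < 1"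
    and u_norm: "(\<Sum>i=1..N. (u i)^2) = 1"
    and al: "\<alpha>^2 \<le> (u N)^2"
  shows "\<exists>\<sigma>. (\<Sum>i=1..N. (\<sigma> i)^2) = 1 \<and> (\<Sum>i=1..N. \<sigma> i * u i) = \<alpha> \<and>
     (\<forall>e>0. \<exists>l>lam N. l - \<alpha>^2 / s_fun N lam u l \<le>
        (\<Sum>i=1..N. lam i * (\<sigma> i)^2) + 2 * (lam N - lam 1) * ((u N)^2 / sqrt (1 - (u N)^2)) + e)"
proof -
  note bs = basics[of N lam u, OF mono u_pos u_norm]
  define p where "p = (u N)^2"
  define D where "D = lam N - lam 1"
  have p0: "0 < p" "p < 1" using bs p_def by auto
  have uN: "u N \<noteq> 0" using p0 p_def by auto
  have N1: "1 \<le> N" using bs by auto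
  define r2 where "r2 = p * (1 - \<alpha>^2) / (1 - p)"
  define r where "r = sqrt r2"
  have a2: "\<alpha>^2 \<le> p" using al p_def by simp
  have r20: "0 \<le> r2" unfolding r2_def using p0 a2 by (auto intro!: divide_nonneg_pos)
  have "\<alpha>^2 \<le> r2"
  proof -
    have "\<alpha>^2 * (1 - p) \<le> p * (1 - \<alpha>^2)" using a2 p0 by (simp add: algebra_simps)
    then show ?thesis unfolding r2_def using p0 by (simp add: le_divide_eq)
  qed
  then have ar: "\<bar>\<alpha>\<bar> \<le> r" unfolding r_def by (metis real_sqrt_abs real_sqrt_le_mono)
  have rr: "r^2 = r2" "0 \<le> r" unfolding r_def using r20 by auto
  define a where "a = (if \<alpha> \<ge> 0 then \<alpha> - r else \<alpha> + r)"
  have aa: "(\<alpha> - a)^2 = r2" using rr by (simp add: a_def)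
  have asq: "a^2 \<le> r2"
  proof -
    have "\<bar>a\<bar> \<le> r" using ar rr by (auto simp: a_def)
    then have "a^2 \<le> r^2" by (metis abs_le_square_iff abs_of_nonneg rr(2))
    then show ?thesis using rr by simp
  qed
  define b where "b = (\<alpha> - a) / u N"
  have bu: "b * u N = \<alpha> - a" using uN by (simp add: b_def)
  have bsq: "b^2 = (1 - \<alpha>^2) / (1 - p)"
    using aa uN p0 by (simp add: b_def power_divide r2_def p_def[symmetric])
  define \<sigma> where "\<sigma> i = a * u i + (if i = N then b else 0)" for i
  have su: "(\<Sum>i=1..N. \<sigma> i * u i) = \<alpha>"
  proof -
    have "(\<Sum>i=1..N. \<sigma> i * u i) = (\<Sum>i=1..N. a * (u i)^2 + (if i = N then b * u N else 0))"
      by (rule sum.cong) (auto simp: \<sigma>_def algebra_simps power2_eq_square)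
    also have "\<dots> = a * (\<Sum>i=1..N. (u i)^2) + b * u N"
      using N1 by (simp add: sum.distrib sum_distrib_left)
    finally show ?thesis using u_norm bu by simp
  qed
  have ss: "(\<Sum>i=1..N. (\<sigma> i)^2) = 1"
  proof -
    have "(\<Sum>i=1..N. (\<sigma> i)^2) = (\<Sum>i=1..N. a^2 * (u i)^2 + (if i = N then 2*a*(b * u N) + b^2 else 0))"
      by (rule sum.cong) (auto simp: \<sigma>_def algebra_simps power2_eq_square)
    also have "\<dots> = a^2 * (\<Sum>i=1..N. (u i)^2) + (2*a*(b * u N) + b^2)"
      using N1 by (simp add: sum.distrib sum_distrib_left)
    also have "\<dots> = a^2 + 2*a*(\<alpha> - a) + (1 - \<alpha>^2) / (1 - p)" using u_norm bu bsq by simp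
    also have "\<dots> = \<alpha>^2 - (\<alpha> - a)^2 + (1 - \<alpha>^2) / (1 - p)" by (simp add: power2_eq_square algebra_simps)
    also have "\<dots> = \<alpha>^2 - p * (1 - \<alpha>^2) / (1 - p) + (1 - \<alpha>^2) / (1 - p)" using aa r2_def by simp
    also have "\<dots> = \<alpha>^2 + (1 - p) * (1 - \<alpha>^2) / (1 - p)" using p0 by (simp add: field_simps)
    also have "\<dots> = 1" using p0 by simp
    finally show ?thesis .
  qed
  define m where "m = (\<Sum>i=1..N. (u i)^2 * (lam i - lam N))"
  have val: "(\<Sum>i=1..N. lam i * (\<sigma> i)^2) = lam N + a^2 * m"
  proof -
    have "(\<Sum>i=1..N. lam i * (\<sigma> i)^2) = (\<Sum>i=1..N. a^2 * ((u i)^2 * (lam i - lam N)) + lam N * (\<sigma> i)^2)"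
      by (rule sum.cong) (auto simp: \<sigma>_def algebra_simps power2_eq_square)
    also have "\<dots> = a^2 * m + lam N" using ss by (simp add: sum.distrib sum_distrib_left[symmetric] m_def)
    finally show ?thesis by simp
  qed
  have mb: "m \<ge> - D * (1 - p)" unfolding m_def D_def p_def
    using mean_bound[OF N1 _ u_norm] bs by blast
  have "a^2 * (D * (1 - p)) \<le> r2 * (D * (1 - p))"
    using asq p0 bs by (intro mult_right_mono) (auto simp: D_def)
  also have "\<dots> = p * (1 - \<alpha>^2) * D" using p0 by (simp add: r2_def field_simps)
  also have "\<dots> \<le> p * D" using p0 bs by (simp add: D_def mult_le_cancel_left1 mult_le_cancel_right1)
  finally have k1: "a^2 * (D * (1 - p)) \<le> D * p" by (metis mult.commute)
  have "- (a^2 * (D * (1 - p))) \<le> a^2 * m" using mult_left_mono[OF mb, of "a^2"] by simp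
  then have vlow: "lam N - D * p \<le> (\<Sum>i=1..N. lam i * (\<sigma> i)^2)" using val k1 by linarith
  have Bg: "D * p \<le> 2 * D * (p / sqrt (1 - p))" using B_ge[of D p] p0 bs D_def by simp
  have "\<forall>e>0. \<exists>l>lam N. l - \<alpha>^2 / s_fun N lam u l \<le>
        (\<Sum>i=1..N. lam i * (\<sigma> i)^2) + 2 * (lam N - lam 1) * ((u N)^2 / sqrt (1 - (u N)^2)) + e"
  proof (intro allI impI)
    fix e :: real assume e: "0 < e"
    have lt: "\<forall>i\<in>{1..N}. lam i < lam N + e" using bs e by force
    have "0 < s_fun N lam u (lam N + e)" using s_pos[OF N1 lt] bs by simp
    then have "lam N + e - \<alpha>^2 / s_fun N lam u (lam N + e) \<le> lam N + e" by simp
    also have "\<dots> \<le> (\<Sum>i=1..N. lam i * (\<sigma> i)^2) + 2 * (lam N - lam 1) * ((u N)^2 / sqrt (1 - (u N)^2)) + e"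
      using vlow Bg unfolding D_def p_def by linarith
    finally show "\<exists>l>lam N. l - \<alpha>^2 / s_fun N lam u l \<le>
        (\<Sum>i=1..N. lam i * (\<sigma> i)^2) + 2 * (lam N - lam 1) * ((u N)^2 / sqrt (1 - (u N)^2)) + e"
      using e by (intro exI[of _ "lam N + e"]) auto
  qed
  then show ?thesis using ss su by blast
qed


lemma recip_bound:
  fixes x y A D :: real
  assumes "0 < y" "y \<le> x" "y \<le> A" "\<bar>x - A\<bar> \<le> D"
  shows "1/x \<le> 1/A - (x - A)/A^2 + D^2/(y*A^2)"
proof -
  have x0: "0 < x" "0 < A" using assms by auto
  have eq: "1/x = 1/A - (x - A)/A^2 + (x - A)^2/(x*A^2)"
    using x0 by (simp add: field_simps power2_eq_square)
  have "(x - A)^2 \<le> D^2" using assms(4) by (metis abs_le_square_iff abs_of_nonneg abs_ge_zero order_trans)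
  then have "(x - A)^2/(x*A^2) \<le> D^2/(x*A^2)" using x0 by (intro divide_right_mono) auto
  also have "\<dots> \<le> D^2/(y*A^2)" using x0 assms by (intro divide_left_mono mult_right_mono) auto
  finally show ?thesis using eq by linarith
qed

lemma am_hm:
  fixes s y A D :: real
  assumes "0 < s" "0 < y" "0 < A" "s \<le> 1/A + D^2/(y*A^2)"
  shows "A - 1/s \<le> D^2/y"
proof -
  have q: "1/A + D^2/(y*A^2) = (y*A + D^2)/(y*A^2)" using assms by (simp add: field_simps power2_eq_square)
  have p: "0 < y*A + D^2" using assms by (simp add: add_pos_nonneg)
  have "(y*A^2)/(y*A + D^2) \<le> 1/s"
  proof -
    have "s \<le> (y*A + D^2)/(y*A^2)" using assms q by simp
    moreover have "0 < (y*A + D^2)/(y*A^2) * s" using assms p by (intro mult_pos_pos divide_pos_pos) auto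
    ultimately have "1/((y*A + D^2)/(y*A^2)) \<le> 1/s" by (intro divide_left_mono) auto
    then show ?thesis by simp
  qed
  moreover have "A - (y*A^2)/(y*A + D^2) = A * D^2/(y*A + D^2)"
    using p by (simp add: field_simps power2_eq_square)
  moreover have "A * D^2/(y*A + D^2) \<le> D^2/y"
  proof -
    have "A * D^2 * y \<le> D^2 * (y*A + D^2)" by (simp add: algebra_simps)
    then show ?thesis using p assms by (simp add: divide_simps)
  qed
  ultimately show ?thesis by linarith
qed

lemma case3:
  fixes N :: nat and lam u :: "nat \<Rightarrow> real"
  assumes mono: "\<And>i j. 1 \<le> i \<Longrightarrow> i < j \<Longrightarrow> j \<le> N \<Longrightarrow> lam i < lam j"
    and u_pos: "\<And>i. 1 \<le> i \<Longrightarrow> i \<le> N \<Longrightarrow> 0 < (u i)^2 \<and> (u i)^2 < 1"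
    and u_norm: "(\<Sum>i=1..N. (u i)^2) = 1"
    and al: "\<alpha>^2 = 1"
  shows "\<exists>\<sigma>. (\<Sum>i=1..N. (\<sigma> i)^2) = 1 \<and> (\<Sum>i=1..N. \<sigma> i * u i) = \<alpha> \<and>
     (\<forall>e>0. \<exists>l>lam N. l - \<alpha>^2 / s_fun N lam u l \<le>
        (\<Sum>i=1..N. lam i * (\<sigma> i)^2) + 2 * (lam N - lam 1) * ((u N)^2 / sqrt (1 - (u N)^2)) + e)"
proof -
  note bs = basics[of N lam u, OF mono u_pos u_norm]
  define p where "p = (u N)^2"
  define D where "D = lam N - lam 1"
  define B where "B = 2 * D * (p / sqrt (1 - p))"
  have p0: "0 < p" "p < 1" using bs p_def by auto
  have D0: "0 < D" using bs D_def by simp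
  have B0: "0 < B" unfolding B_def using p0 D0 by simp
  have N1: "1 \<le> N" using bs by auto
  define \<sigma> where "\<sigma> i = \<alpha> * u i" for i
  have ss: "(\<Sum>i=1..N. (\<sigma> i)^2) = 1"
    using u_norm al by (simp add: \<sigma>_def power_mult_distrib sum_distrib_left[symmetric])
  have su: "(\<Sum>i=1..N. \<sigma> i * u i) = \<alpha>"
    using u_norm by (simp add: \<sigma>_def power2_eq_square mult.assoc sum_distrib_left[symmetric])
  define M where "M = (\<Sum>i=1..N. lam i * (u i)^2)"
  have val: "(\<Sum>i=1..N. lam i * (\<sigma> i)^2) = M"
    using al by (simp add: \<sigma>_def M_def power_mult_distrib)
  define y where "y = D^2 / B"
  have y0: "0 < y" using D0 B0 y_def by simp
  define l where "l = lam N + y"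
  have lt: "\<forall>i\<in>{1..N}. lam i < l" using bs y0 l_def by force
  have xr: "\<forall>i\<in>{1..N}. y \<le> l - lam i \<and> l - lam i \<le> y + D" using bs l_def D_def by force
  define A where "A = (\<Sum>i=1..N. (u i)^2 * (l - lam i))"
  have AM: "A = l - M"
  proof -
    have "A = (\<Sum>i=1..N. l * (u i)^2 - lam i * (u i)^2)" unfolding A_def
      by (rule sum.cong) (auto simp: algebra_simps)
    also have "\<dots> = l - M" using u_norm by (simp add: sum_subtractf sum_distrib_left[symmetric] M_def)
    finally show ?thesis .
  qed
  have Alo: "y \<le> A"
  proof -
    have "(\<Sum>i=1..N. (u i)^2 * y) \<le> A" unfolding A_def
      using xr by (intro sum_mono mult_left_mono) auto
    then show ?thesis using u_norm by (simp add: sum_distrib_right[symmetric])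
  qed
  have Ahi: "A \<le> y + D"
  proof -
    have "A \<le> (\<Sum>i=1..N. (u i)^2 * (y + D))" unfolding A_def
      using xr by (intro sum_mono mult_left_mono) auto
    then show ?thesis using u_norm by (simp add: sum_distrib_right[symmetric])
  qed
  have A0: "0 < A" using Alo y0 by simp
  have sb: "s_fun N lam u l \<le> 1/A + D^2/(y*A^2)"
  proof -
    have "s_fun N lam u l \<le> (\<Sum>i=1..N. (u i)^2 * (1/A - ((l - lam i) - A)/A^2 + D^2/(y*A^2)))"
      unfolding s_fun_def
    proof (rule sum_mono)
      fix i assume i: "i \<in> {1..N}"
      have "\<bar>(l - lam i) - A\<bar> \<le> D" using xr i Alo Ahi by force
      then have "1/(l - lam i) \<le> 1/A - ((l - lam i) - A)/A^2 + D^2/(y*A^2)"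
        using recip_bound[OF y0 _ Alo] xr i by blast
      then have "(u i)^2 * (1/(l - lam i)) \<le> (u i)^2 * (1/A - ((l - lam i) - A)/A^2 + D^2/(y*A^2))"
        by (intro mult_left_mono) auto
      then show "(u i)^2 / (l - lam i) \<le> (u i)^2 * (1/A - ((l - lam i) - A)/A^2 + D^2/(y*A^2))" by simp
    qed
    also have "\<dots> = (\<Sum>i=1..N. (u i)^2 * (1/A + A/A^2 + D^2/(y*A^2)) - (u i)^2 * (l - lam i)/A^2)"
      by (rule sum.cong) (auto simp: algebra_simps diff_divide_distrib add_divide_distrib)
    also have "\<dots> = (\<Sum>i=1..N. (u i)^2) * (1/A + A/A^2 + D^2/(y*A^2)) - (\<Sum>i=1..N. (u i)^2 * (l - lam i))/A^2"
      by (simp add: sum_subtractf sum_distrib_right sum_divide_distrib)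
    also have "\<dots> = 1/A + D^2/(y*A^2)" using u_norm A0 unfolding A_def[symmetric] by (simp add: power2_eq_square)
    finally show ?thesis .
  qed
  have sp: "0 < s_fun N lam u l" using s_pos[OF N1 lt] bs by simp
  have "A - 1/s_fun N lam u l \<le> D^2/y" by (rule am_hm[OF sp y0 A0 sb])
  then have "l - \<alpha>^2 / s_fun N lam u l \<le> M + B" using al AM y_def B0 D0 by simp
  then have "\<forall>e>0. \<exists>l>lam N. l - \<alpha>^2 / s_fun N lam u l \<le>
        (\<Sum>i=1..N. lam i * (\<sigma> i)^2) + 2 * (lam N - lam 1) * ((u N)^2 / sqrt (1 - (u N)^2)) + e"
    using val y0 l_def unfolding B_def D_def p_def
    by (intro allI impI exI[of _ l]) auto
  then show ?thesis using ss su by blast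
qed


lemma aux5: "(d::real) \<noteq> 0 \<Longrightarrow> S \<noteq> 0 \<Longrightarrow> d * (a*u/(d*S))^2 = a^2/S^2*(u^2/d)"
  by (simp add: field_simps power2_eq_square)

lemma case2:
  fixes N :: nat and lam u :: "nat \<Rightarrow> real"
  assumes mono: "\<And>i j. 1 \<le> i \<Longrightarrow> i < j \<Longrightarrow> j \<le> N \<Longrightarrow> lam i < lam j"
    and u_pos: "\<And>i. 1 \<le> i \<Longrightarrow> i \<le> N \<Longrightarrow> 0 < (u i)^2 \<and> (u i)^2 < 1"
    and u_norm: "(\<Sum>i=1..N. (u i)^2) = 1"
    and al1: "(u N)^2 < \<alpha>^2" and al2: "\<alpha>^2 < 1"
  shows "\<exists>\<sigma>. (\<Sum>i=1..N. (\<sigma> i)^2) = 1 \<and> (\<Sum>i=1..N. \<sigma> i * u i) = \<alpha> \<and>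
     (\<forall>e>0. \<exists>l>lam N. l - \<alpha>^2 / s_fun N lam u l \<le>
        (\<Sum>i=1..N. lam i * (\<sigma> i)^2) + 2 * (lam N - lam 1) * ((u N)^2 / sqrt (1 - (u N)^2)) + e)"
proof -
  note bs = basics[of N lam u, OF mono u_pos u_norm]
  define p where "p = (u N)^2"
  define D where "D = lam N - lam 1"
  define B where "B = 2 * D * (p / sqrt (1 - p))"
  have p0: "0 < p" "p < 1" using bs p_def by auto
  have D0: "0 < D" using bs D_def by simp
  have B0: "0 < B" unfolding B_def using p0 D0 by simp
  have N1: "1 \<le> N" using bs by auto
  define T where "T l = (\<Sum>i=1..N. (u i)^2 / (l - lam i)^2)" for l
  define s where "s l = s_fun N lam u l" for l
  define f where "f l = \<alpha>^2 * T l - (s l)^2" for l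
  have lt_of: "\<forall>i\<in>{1..N}. lam i < l" if "lam N < l" for l using bs that by force
  have cont: "continuous_on {a..b} f" if "lam N < a" for a b
  proof -
    have ne: "\<forall>x\<in>{a..b}. \<forall>i\<in>{1..N}. x - lam i \<noteq> 0" using lt_of that by force
    show ?thesis unfolding f_def T_def s_def s_fun_def
      using ne by (intro continuous_intros) auto
  qed
  have aabs: "\<bar>u N\<bar> < \<bar>\<alpha>\<bar>" using al1 power2_less_imp_less[of "\<bar>u N\<bar>" "\<bar>\<alpha>\<bar>"] by simp
  have aone: "\<bar>\<alpha>\<bar> < 1" using al2 by (simp add: abs_square_less_1)
  have uN0: "0 < \<bar>u N\<bar>" using p0 p_def by auto
  have pa: "p < \<bar>\<alpha>\<bar> * \<bar>u N\<bar>"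
  proof -
    have "p = \<bar>u N\<bar> * \<bar>u N\<bar>" by (simp add: p_def power2_eq_square abs_mult[symmetric])
    also have "\<dots> < \<bar>\<alpha>\<bar> * \<bar>u N\<bar>" using aabs uN0 by (intro mult_strict_right_mono) auto
    finally show ?thesis .
  qed
  define g where "g = lam N - lam (N - 1)"
  have g0: "0 < g" using mono[of "N - 1" N] bs by (simp add: g_def)
  have lamg: "lam i \<le> lam (N - 1)" if "i \<in> {1..N}" "i \<noteq> N" for i
  proof (cases "i = N - 1")
    case False
    then have "i < N - 1" using that by auto
    then show ?thesis using mono[of i "N - 1"] that by auto
  qed simp
  define \<epsilon> where "\<epsilon> = g * (\<bar>\<alpha>\<bar> * \<bar>u N\<bar> - p)"
  have e0: "0 < \<epsilon>" using g0 pa by (simp add: \<epsilon>_def)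
  define l1 where "l1 = lam N + \<epsilon>"
  have s1: "s l1 \<le> p/\<epsilon> + 1/g"
  proof -
    have "s l1 \<le> (\<Sum>i=1..N. (if i = N then p/\<epsilon> else 0) + (u i)^2/g)"
      unfolding s_def s_fun_def
    proof (rule sum_mono)
      fix i assume i: "i \<in> {1..N}"
      show "(u i)^2 / (l1 - lam i) \<le> (if i = N then p/\<epsilon> else 0) + (u i)^2/g"
      proof (cases "i = N")
        case True then show ?thesis using g0 by (simp add: l1_def p_def)
      next
        case False
        have "g \<le> l1 - lam i" using lamg[OF i False] e0 by (simp add: g_def l1_def)
        then have "(u i)^2 / (l1 - lam i) \<le> (u i)^2 / g" using g0 by (intro divide_left_mono) auto
        then show ?thesis using False by simp
      qed
    qed
    also have "\<dots> = p/\<epsilon> + 1/g" using N1 u_norm by (simp add: sum.distrib sum_divide_distrib[symmetric])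
    finally show ?thesis .
  qed
  have T1: "p/\<epsilon>^2 \<le> T l1" unfolding T_def
  proof -
    have "(u N)^2/(l1 - lam N)^2 \<le> (\<Sum>i=1..N. (u i)^2 / (l1 - lam i)^2)"
      by (rule member_le_sum) (use N1 in auto)
    then show "p/\<epsilon>^2 \<le> (\<Sum>i=1..N. (u i)^2 / (l1 - lam i)^2)" by (simp add: l1_def p_def)
  qed
  have lN1: "lam N < l1" using e0 l1_def by simp
  have sp: "0 < s l" if "lam N < l" for l using s_pos[OF N1 lt_of[OF that]] bs s_def by simp
  have key1: "p/\<epsilon> + 1/g = \<bar>\<alpha>\<bar> * \<bar>u N\<bar> / \<epsilon>"
    using e0 g0 by (simp add: \<epsilon>_def field_simps)
  have f1: "0 \<le> f l1"
  proof -
    have "(s l1)^2 \<le> (\<bar>\<alpha>\<bar> * \<bar>u N\<bar> / \<epsilon>)^2"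
      using s1 key1 sp[OF lN1] by (intro power_mono) auto
    also have "\<dots> = \<alpha>^2 * (p/\<epsilon>^2)" by (simp add: p_def power_mult_distrib power_divide)
    also have "\<dots> \<le> \<alpha>^2 * T l1" using T1 by (intro mult_left_mono) auto
    finally show ?thesis by (simp add: f_def)
  qed
  have a0: "0 < \<bar>\<alpha>\<bar>" using aabs uN0 by simp
  define y where "y = \<bar>\<alpha>\<bar> * D / (1 - \<bar>\<alpha>\<bar>)"
  have y0: "0 < y" using a0 aone D0 by (simp add: y_def)
  define l2 where "l2 = lam N + y"
  have lN2: "lam N < l2" using y0 l2_def by simp
  have xr: "\<forall>i\<in>{1..N}. y \<le> l2 - lam i \<and> l2 - lam i \<le> y + D" using bs l2_def D_def by force
  have T2: "T l2 \<le> 1/y^2"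
  proof -
    have "T l2 \<le> (\<Sum>i=1..N. (u i)^2 / y^2)" unfolding T_def
    proof (rule sum_mono)
      fix i assume i: "i \<in> {1..N}"
      have "y^2 \<le> (l2 - lam i)^2" using xr i y0 by (intro power_mono) auto
      moreover have "0 < l2 - lam i" using xr i y0 by force
      ultimately show "(u i)^2 / (l2 - lam i)^2 \<le> (u i)^2 / y^2" using y0 by (intro divide_left_mono) auto
    qed
    also have "\<dots> = 1/y^2" using u_norm by (simp add: sum_divide_distrib[symmetric])
    finally show ?thesis .
  qed
  have s2: "1/(y + D) \<le> s l2"
  proof -
    have "(\<Sum>i=1..N. (u i)^2 / (y + D)) \<le> s l2" unfolding s_def s_fun_def
    proof (rule sum_mono)
      fix i assume i: "i \<in> {1..N}"
      have "0 < l2 - lam i" using xr i y0 by force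
      then show "(u i)^2 / (y + D) \<le> (u i)^2 / (l2 - lam i)" using xr i y0 D0 by (intro divide_left_mono) auto
    qed
    then show ?thesis using u_norm by (simp add: sum_divide_distrib[symmetric])
  qed
  have key2: "\<bar>\<alpha>\<bar> / y = 1/(y + D)"
    using aone a0 D0 by (simp add: y_def field_simps)
  have f2: "f l2 \<le> 0"
  proof -
    have "\<alpha>^2 * T l2 \<le> \<alpha>^2 * (1/y^2)" using T2 by (intro mult_left_mono) auto
    also have "\<dots> = (\<bar>\<alpha>\<bar> / y)^2" by (simp add: power_divide)
    also have "\<dots> = (1/(y + D))^2" using key2 by simp
    also have "\<dots> \<le> (s l2)^2" using s2 y0 D0 by (intro power_mono) auto
    finally show ?thesis by (simp add: f_def)
  qed
  obtain ls where ls: "lam N < ls" "f ls = 0"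
  proof (cases "l1 \<le> l2")
    case True
    from IVT2'[of f l2 0 l1, OF f2 f1 True cont[OF lN1]] obtain x where "l1 \<le> x" "f x = 0" by blast
    then show ?thesis using lN1 by (intro that[of x]) auto
  next
    case False
    from IVT'[of f l2 0 l1, OF f2 f1 _ cont[OF lN2]] False obtain x where "l2 \<le> x" "f x = 0" by auto
    then show ?thesis using lN2 by (intro that[of x]) auto
  qed
  have ltl: "\<forall>i\<in>{1..N}. lam i < ls" using lt_of[OF ls(1)] .
  have sls: "0 < s ls" using sp[OF ls(1)] .
  have fT: "\<alpha>^2 * T ls = (s ls)^2" using ls(2) by (simp add: f_def)
  define \<sigma> where "\<sigma> i = \<alpha> * u i / ((ls - lam i) * s ls)" for i
  have ss: "(\<Sum>i=1..N. (\<sigma> i)^2) = 1"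
  proof -
    have "(\<Sum>i=1..N. (\<sigma> i)^2) = (\<Sum>i=1..N. \<alpha>^2 / (s ls)^2 * ((u i)^2 / (ls - lam i)^2))"
      by (rule sum.cong) (auto simp: \<sigma>_def power_mult_distrib power_divide)
    also have "\<dots> = \<alpha>^2 / (s ls)^2 * T ls" by (simp only: T_def sum_distrib_left)
    also have "\<dots> = \<alpha>^2 * T ls / (s ls)^2" by simp
    also have "\<dots> = 1" using fT sls by simp
    finally show ?thesis .
  qed
  have su: "(\<Sum>i=1..N. \<sigma> i * u i) = \<alpha>"
  proof -
    have "(\<Sum>i=1..N. \<sigma> i * u i) = (\<Sum>i=1..N. \<alpha> / s ls * ((u i)^2 / (ls - lam i)))"
      by (rule sum.cong) (auto simp: \<sigma>_def power2_eq_square mult.commute mult.left_commute)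
    also have "\<dots> = \<alpha> / s ls * s ls" by (simp only: s_def s_fun_def sum_distrib_left)
    also have "\<dots> = \<alpha>" using sls by simp
    finally show ?thesis .
  qed
  have val: "(\<Sum>i=1..N. lam i * (\<sigma> i)^2) = ls - \<alpha>^2 / s ls"
  proof -
    have "(\<Sum>i=1..N. lam i * (\<sigma> i)^2) = (\<Sum>i=1..N. ls * (\<sigma> i)^2 - \<alpha>^2 / (s ls)^2 * ((u i)^2 / (ls - lam i)))"
    proof (rule sum.cong)
      fix i assume i: "i \<in> {1..N}"
      then have d: "ls - lam i \<noteq> 0" using ltl by fastforce
      show "lam i * (\<sigma> i)^2 = ls * (\<sigma> i)^2 - \<alpha>^2 / (s ls)^2 * ((u i)^2 / (ls - lam i))"
      proof -
        have "(ls - lam i) * (\<sigma> i)^2 = \<alpha>^2 / (s ls)^2 * ((u i)^2 / (ls - lam i))"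
          unfolding \<sigma>_def using aux5[of "ls - lam i" "s ls" \<alpha> "u i"] d sls by simp
        then show ?thesis by (simp add: algebra_simps)
      qed
    qed simp
    also have "\<dots> = ls * (\<Sum>i=1..N. (\<sigma> i)^2) - \<alpha>^2 / (s ls)^2 * s ls"
      by (simp only: sum_subtractf sum_distrib_left s_def s_fun_def)
    also have "\<dots> = ls - \<alpha>^2 / s ls" using ss sls by (simp add: power2_eq_square)
    finally show ?thesis .
  qed
  have "\<forall>e>0. \<exists>l>lam N. l - \<alpha>^2 / s_fun N lam u l \<le>
        (\<Sum>i=1..N. lam i * (\<sigma> i)^2) + 2 * (lam N - lam 1) * ((u N)^2 / sqrt (1 - (u N)^2)) + e"
  proof (intro allI impI)
    fix e :: real assume e: "0 < e"
    have "ls - \<alpha>^2 / s_fun N lam u ls \<le> (\<Sum>i=1..N. lam i * (\<sigma> i)^2) + B + e"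
      using val B0 e s_def by simp
    then show "\<exists>l>lam N. l - \<alpha>^2 / s_fun N lam u l \<le>
        (\<Sum>i=1..N. lam i * (\<sigma> i)^2) + 2 * (lam N - lam 1) * ((u N)^2 / sqrt (1 - (u N)^2)) + e"
      using ls(1) unfolding B_def D_def p_def by blast
  qed
  then show ?thesis using ss su by blast
qed


theorem corollary3p5:
  fixes N :: nat and lam u :: "nat \<Rightarrow> real"
  assumes mono: "\<And>i j. 1 \<le> i \<Longrightarrow> i < j \<Longrightarrow> j \<le> N \<Longrightarrow> lam i < lam j"
    and u_pos: "\<And>i. 1 \<le> i \<Longrightarrow> i \<le> N \<Longrightarrow> 0 < (u i)^2 \<and> (u i)^2 < 1"
    and u_norm: "(\<Sum>i=1..N. (u i)^2) = 1"
  shows "(SUP \<alpha>\<in>{-1..1::real}.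
            \<bar>Sup {(\<Sum>i=1..N. lam i * (\<sigma> i)^2) | \<sigma>.
                    (\<Sum>i=1..N. (\<sigma> i)^2) = 1 \<and> (\<Sum>i=1..N. \<sigma> i * u i) = \<alpha>}
             - Inf {l - \<alpha>^2 / s_fun N lam u l | l. l > lam N}\<bar>)
         \<le> 2 * (lam N - lam 1) * ((u N)^2 / sqrt (1 - (u N)^2))"
proof (rule cSUP_least)
  show "{-1..1::real} \<noteq> {}" by simp
next
  fix \<alpha> :: real assume a: "\<alpha> \<in> {-1..1}"
  note bs = basics[of N lam u, OF mono u_pos u_norm]
  have N1: "1 \<le> N" using bs by auto
  define B where "B = 2 * (lam N - lam 1) * ((u N)^2 / sqrt (1 - (u N)^2))"
  define S where "S = {(\<Sum>i=1..N. lam i * (\<sigma> i)^2) | \<sigma>.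
                    (\<Sum>i=1..N. (\<sigma> i)^2) = 1 \<and> (\<Sum>i=1..N. \<sigma> i * u i) = \<alpha>}"
  define L where "L = {l - \<alpha>^2 / s_fun N lam u l | l. l > lam N}"
  have lt_of: "\<forall>i\<in>{1..N}. lam i < l" if "lam N < l" for l using bs that by force
  have sp: "0 < s_fun N lam u l" if "lam N < l" for l using s_pos[OF N1 lt_of[OF that]] bs by simp
  have "\<alpha>^2 \<le> 1" using a by (auto simp: abs_square_le_1)
  then have "\<alpha>^2 \<le> (u N)^2 \<or> ((u N)^2 < \<alpha>^2 \<and> \<alpha>^2 < 1) \<or> \<alpha>^2 = 1" by linarith
  then obtain \<sigma>0 where f1: "(\<Sum>i=1..N. (\<sigma>0 i)^2) = 1" and f2: "(\<Sum>i=1..N. \<sigma>0 i * u i) = \<alpha>"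
     and H: "\<forall>e>0. \<exists>l>lam N. l - \<alpha>^2 / s_fun N lam u l \<le> (\<Sum>i=1..N. lam i * (\<sigma>0 i)^2) + B + e"
    unfolding B_def using case1[of N lam u, OF mono u_pos u_norm] case2[of N lam u, OF mono u_pos u_norm] case3[of N lam u, OF mono u_pos u_norm]
    by blast
  define v where "v = (\<Sum>i=1..N. lam i * (\<sigma>0 i)^2)"
  have vS: "v \<in> S" unfolding S_def v_def using f1 f2 by blast
  have Sne: "S \<noteq> {}" using vS by blast
  have Sbd: "bdd_above S" unfolding S_def bdd_above_def
    using val_le_top[of N lam] bs by blast
  have lN: "lam N + 1 - \<alpha>^2 / s_fun N lam u (lam N + 1) \<in> L" unfolding L_def by force
  then have Lne: "L \<noteq> {}" by blast
  have wd: "x \<le> y" if "x \<in> S" "y \<in> L" for x y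
  proof -
    from that obtain \<sigma> l where x: "x = (\<Sum>i=1..N. lam i * (\<sigma> i)^2)" "(\<Sum>i=1..N. (\<sigma> i)^2) = 1"
      "(\<Sum>i=1..N. \<sigma> i * u i) = \<alpha>" and y: "y = l - \<alpha>^2 / s_fun N lam u l" "lam N < l"
      unfolding S_def L_def by blast
    show ?thesis using weak_dual[OF lt_of[OF y(2)] sp[OF y(2)] x(2) x(3)] x(1) y(1) by simp
  qed
  have Lbd: "bdd_below L" unfolding bdd_below_def using wd vS by blast
  have SL: "Sup S \<le> Inf L"
    by (rule cSup_least[OF Sne]) (rule cInf_greatest[OF Lne], rule wd)
  have vSup: "v \<le> Sup S" by (rule cSup_upper[OF vS Sbd])
  have IL: "Inf L \<le> v + B"
  proof (rule field_le_epsilon)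
    fix e :: real assume e: "0 < e"
    obtain l where l: "lam N < l" "l - \<alpha>^2 / s_fun N lam u l \<le> v + B + e" using H e v_def by blast
    have "l - \<alpha>^2 / s_fun N lam u l \<in> L" using l unfolding L_def by blast
    then have "Inf L \<le> l - \<alpha>^2 / s_fun N lam u l" by (rule cInf_lower[OF _ Lbd])
    then show "Inf L \<le> v + B + e" using l by linarith
  qed
  have "\<bar>Sup S - Inf L\<bar> \<le> B" using SL vSup IL by linarith
  then show "\<bar>Sup {(\<Sum>i=1..N. lam i * (\<sigma> i)^2) | \<sigma>.
                    (\<Sum>i=1..N. (\<sigma> i)^2) = 1 \<and> (\<Sum>i=1..N. \<sigma> i * u i) = \<alpha>}
             - Inf {l - \<alpha>^2 / s_fun N lam u l | l. l > lam N}\<bar>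
         \<le> 2 * (lam N - lam 1) * ((u N)^2 / sqrt (1 - (u N)^2))"
    unfolding S_def L_def B_def .
qed

end
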